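(* For the uniform-cost inverse fractional knapsack problem under the $l_\infty$-norm (defined in the context), if it has an optimal solution, then there exists an optimal solution $(u,v,\lambda,\mu)$ with $v_i=0$ for all $i\in I^1$ and $u_i=\mu_i=0$ for all $i\in I^0$; i.e., profits of items in $I^1$ are only increased, profits of items in $I^0$ are only reduced, and costs of items in $I^0$ are only increased.
   Context: The fractional knapsack problem with profits $q_i$, costs $d_i$ and budget $b$ is $\max\{\sum_i q_ix_i:\sum_i d_ix_i\le b,\ 0\le x_i\le 1\}$. Given positive integers $p_i,c_i$ ($i=1,\dots,n$), a budget $b$, a vector $x^*\in\{0,1\}^n$, $I^1=\{i:x^*_i=1\}$, $I^0=\{i:x^*_i=0\}$, and nonnegative integer bounds $\bar u_i,\bar v_i,\bar\lambda_i,\bar\mu_i$. A feasible modification is $(u,v,\lambda,\mu)$ with $u_i\in[0,\bar u_i]\cap\mathbb Z$, $v_i\in[0,\bar v_i]\cap\mathbb Z$, $\lambda_i\in[0,\bar\lambda_i]\cap\mathbb Z$, $\mu_i\in[0,\bar\mu_i]\cap\mathbb Z$, giving $\tilde p_i=p_i+u_i-v_i$, $\tilde c_i=c_i+\lambda_i-\mu_i$. The problem asks for a feasible modification such that $x^*$ is an optimal solution of the fractional knapsack problem with profits $\tilde p_i$, costs $\tilde c_i$ and budget $b$, minimizing $\max_{1\le i\le n}\max\{u_i,v_i,\lambda_i,\mu_i\}$. *)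

theory Defs
  imports Complex_Main
begin

definition frac_feasible :: "nat \<Rightarrow> (nat \<Rightarrow> real) \<Rightarrow> real \<Rightarrow> (nat \<Rightarrow> real) \<Rightarrow> bool" where
  "frac_feasible n d b x \<longleftrightarrow>
     (\<forall>i\<in>{1..n}. 0 \<le> x i \<and> x i \<le> 1) \<and> (\<Sum>i=1..n. d i * x i) \<le> b"

definition frac_optimal ::
  "nat \<Rightarrow> (nat \<Rightarrow> real) \<Rightarrow> (nat \<Rightarrow> real) \<Rightarrow> real \<Rightarrow> (nat \<Rightarrow> real) \<Rightarrow> bool" where
  "frac_optimal n q d b x \<longleftrightarrow> frac_feasible n d b x \<and>
     (\<forall>y. frac_feasible n d b y \<longrightarrow> (\<Sum>i=1..n. q i * y i) \<le> (\<Sum>i=1..n. q i * x i))"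

definition feasible_mod ::
  "nat \<Rightarrow> (nat \<Rightarrow> int) \<Rightarrow> (nat \<Rightarrow> int) \<Rightarrow> (nat \<Rightarrow> int) \<Rightarrow> (nat \<Rightarrow> int)
   \<Rightarrow> (nat \<Rightarrow> int) \<Rightarrow> (nat \<Rightarrow> int) \<Rightarrow> (nat \<Rightarrow> int) \<Rightarrow> (nat \<Rightarrow> int) \<Rightarrow> bool" where
  "feasible_mod n ub vb lb mb u v l m \<longleftrightarrow>
     (\<forall>i\<in>{1..n}. 0 \<le> u i \<and> u i \<le> ub i \<and> 0 \<le> v i \<and> v i \<le> vb i \<and>
                  0 \<le> l i \<and> l i \<le> lb i \<and> 0 \<le> m i \<and> m i \<le> mb i)"

definition inv_admissible ::
  "nat \<Rightarrow> (nat \<Rightarrow> int) \<Rightarrow> (nat \<Rightarrow> int) \<Rightarrow> real \<Rightarrow> (nat \<Rightarrow> real)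
   \<Rightarrow> (nat \<Rightarrow> int) \<Rightarrow> (nat \<Rightarrow> int) \<Rightarrow> (nat \<Rightarrow> int) \<Rightarrow> (nat \<Rightarrow> int)
   \<Rightarrow> (nat \<Rightarrow> int) \<Rightarrow> (nat \<Rightarrow> int) \<Rightarrow> (nat \<Rightarrow> int) \<Rightarrow> (nat \<Rightarrow> int) \<Rightarrow> bool" where
  "inv_admissible n p c b xs ub vb lb mb u v l m \<longleftrightarrow>
     feasible_mod n ub vb lb mb u v l m \<and>
     frac_optimal n (\<lambda>i. real_of_int (p i + u i - v i)) (\<lambda>i. real_of_int (c i + l i - m i)) b xs"

text \<open>l_infinity objective: max over items of max{u_i,v_i,lambda_i,mu_i}
(0 is inserted only to make the Max well-defined for n = 0; all entries are >= 0).\<close>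
definition linf_cost ::
  "nat \<Rightarrow> (nat \<Rightarrow> int) \<Rightarrow> (nat \<Rightarrow> int) \<Rightarrow> (nat \<Rightarrow> int) \<Rightarrow> (nat \<Rightarrow> int) \<Rightarrow> int" where
  "linf_cost n u v l m = Max (insert 0 ((\<lambda>i. max (max (u i) (v i)) (max (l i) (m i))) ` {1..n}))"

definition inv_optimal ::
  "nat \<Rightarrow> (nat \<Rightarrow> int) \<Rightarrow> (nat \<Rightarrow> int) \<Rightarrow> real \<Rightarrow> (nat \<Rightarrow> real)
   \<Rightarrow> (nat \<Rightarrow> int) \<Rightarrow> (nat \<Rightarrow> int) \<Rightarrow> (nat \<Rightarrow> int) \<Rightarrow> (nat \<Rightarrow> int)
   \<Rightarrow> (nat \<Rightarrow> int) \<Rightarrow> (nat \<Rightarrow> int) \<Rightarrow> (nat \<Rightarrow> int) \<Rightarrow> (nat \<Rightarrow> int) \<Rightarrow> bool" where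
  "inv_optimal n p c b xs ub vb lb mb u v l m \<longleftrightarrow>
     inv_admissible n p c b xs ub vb lb mb u v l m \<and>
     (\<forall>u' v' l' m'. inv_admissible n p c b xs ub vb lb mb u' v' l' m' \<longrightarrow>
        linf_cost n u v l m \<le> linf_cost n u' v' l' m')"

end

theory Submission
  imports Defs
begin

theorem mainTheorem5:
  fixes n :: nat and p c ub vb lb mb :: "nat \<Rightarrow> int" and b :: real and xs :: "nat \<Rightarrow> real"
  assumes "\<forall>i\<in>{1..n}. p i > 0 \<and> c i > 0"
    and "\<forall>i\<in>{1..n}. ub i \<ge> 0 \<and> vb i \<ge> 0 \<and> lb i \<ge> 0 \<and> mb i \<ge> 0"
    and "\<forall>i\<in>{1..n}. xs i = 0 \<or> xs i = 1"
    and "\<exists>u v l m. inv_optimal n p c b xs ub vb lb mb u v l m"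
  shows "\<exists>u v l m. inv_optimal n p c b xs ub vb lb mb u v l m \<and>
           (\<forall>i\<in>{1..n}. xs i = 1 \<longrightarrow> v i = 0) \<and>
           (\<forall>i\<in>{1..n}. xs i = 0 \<longrightarrow> u i = 0 \<and> m i = 0)"
proof -
  obtain u v l m where opt: "inv_optimal n p c b xs ub vb lb mb u v l m"
    using assms(4) by blast
  have adm: "inv_admissible n p c b xs ub vb lb mb u v l m"
    using opt unfolding inv_optimal_def by blast
  have fm: "feasible_mod n ub vb lb mb u v l m"
    and fo: "frac_optimal n (\<lambda>i. real_of_int (p i + u i - v i)) (\<lambda>i. real_of_int (c i + l i - m i)) b xs"
    using adm unfolding inv_admissible_def by blast+
  define u' where "u' = (\<lambda>i. if xs i = 0 then 0 else u i)"
  define v' where "v' = (\<lambda>i. if xs i = 1 then 0 else v i)"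
  define m' where "m' = (\<lambda>i. if xs i = 0 then 0 else m i)"
  have fm': "feasible_mod n ub vb lb mb u' v' l m'"
    using fm assms(2) unfolding feasible_mod_def u'_def v'_def m'_def by auto
  define q where "q = (\<lambda>i. real_of_int (p i + u i - v i))"
  define d where "d = (\<lambda>i. real_of_int (c i + l i - m i))"
  define q' where "q' = (\<lambda>i. real_of_int (p i + u' i - v' i))"
  define d' where "d' = (\<lambda>i. real_of_int (c i + l i - m' i))"
  have fo2: "frac_feasible n d b xs"
    "\<And>y. frac_feasible n d b y \<Longrightarrow> (\<Sum>i=1..n. q i * y i) \<le> (\<Sum>i=1..n. q i * xs i)"
    using fo unfolding frac_optimal_def q_def d_def by auto
  have dx: "(\<Sum>i=1..n. d' i * xs i) = (\<Sum>i=1..n. d i * xs i)"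
    by (rule sum.cong) (auto simp: d'_def d_def m'_def)
  have feas_x: "frac_feasible n d' b xs"
    using fo2(1) dx unfolding frac_feasible_def by simp
  have "frac_optimal n q' d' b xs"
    unfolding frac_optimal_def
  proof (intro conjI allI impI feas_x)
    fix y assume fy: "frac_feasible n d' b y"
    have y01: "\<forall>i\<in>{1..n}. 0 \<le> y i \<and> y i \<le> 1" using fy unfolding frac_feasible_def by blast
    have "(\<Sum>i=1..n. d i * y i) \<le> (\<Sum>i=1..n. d' i * y i)"
    proof (rule sum_mono)
      fix i assume i: "i \<in> {1..n}"
      have "d i \<le> d' i" using fm i unfolding feasible_mod_def d_def d'_def m'_def by auto
      then show "d i * y i \<le> d' i * y i" using y01 i by (simp add: mult_right_mono)
    qed
    then have fy0: "frac_feasible n d b y" using fy unfolding frac_feasible_def by auto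
    have "(\<Sum>i=1..n. q' i * y i - q' i * xs i) \<le> (\<Sum>i=1..n. q i * y i - q i * xs i)"
    proof (rule sum_mono)
      fix i assume i: "i \<in> {1..n}"
      have nn: "0 \<le> u i" "0 \<le> v i" using fm i unfolding feasible_mod_def by auto
      have "xs i = 0 \<or> xs i = 1" using assms(3) i by blast
      then show "q' i * y i - q' i * xs i \<le> q i * y i - q i * xs i"
      proof
        assume x0: "xs i = 0"
        have "q' i \<le> q i" using nn x0 unfolding q_def q'_def u'_def v'_def by auto
        then show ?thesis using x0 y01 i by (simp add: mult_right_mono)
      next
        assume x1: "xs i = 1"
        have "q i \<le> q' i" using nn x1 unfolding q_def q'_def u'_def v'_def by auto
        then have "(q' i - q i) * (y i - 1) \<le> 0" using y01 i
          by (simp add: mult_nonneg_nonpos)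
        then show ?thesis using x1 by (simp add: algebra_simps)
      qed
    qed
    also have "\<dots> \<le> 0" using fo2(2)[OF fy0] by (simp add: sum_subtractf)
    finally show "(\<Sum>i=1..n. q' i * y i) \<le> (\<Sum>i=1..n. q' i * xs i)"
      by (simp add: sum_subtractf)
  qed
  then have adm': "inv_admissible n p c b xs ub vb lb mb u' v' l m'"
    using fm' unfolding inv_admissible_def q'_def d'_def by simp
  have cost: "linf_cost n u' v' l m' \<le> linf_cost n u v l m"
    unfolding linf_cost_def
  proof (rule Max.boundedI)
    show "finite (insert 0 ((\<lambda>i. max (max (u' i) (v' i)) (max (l i) (m' i))) ` {1..n}))" by simp
    show "insert 0 ((\<lambda>i. max (max (u' i) (v' i)) (max (l i) (m' i))) ` {1..n}) \<noteq> {}" by simp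
    fix a assume "a \<in> insert 0 ((\<lambda>i. max (max (u' i) (v' i)) (max (l i) (m' i))) ` {1..n})"
    then show "a \<le> Max (insert 0 ((\<lambda>i. max (max (u i) (v i)) (max (l i) (m i))) ` {1..n}))"
    proof
      assume "a = 0" then show ?thesis by (simp add: Max_ge_iff)
    next
      assume "a \<in> (\<lambda>i. max (max (u' i) (v' i)) (max (l i) (m' i))) ` {1..n}"
      then obtain i where i: "i \<in> {1..n}" and a: "a = max (max (u' i) (v' i)) (max (l i) (m' i))" by blast
      have nn: "0 \<le> u i" "0 \<le> v i" "0 \<le> m i" using fm i unfolding feasible_mod_def by auto
      have "a \<le> max (max (u i) (v i)) (max (l i) (m i))"
        using nn unfolding a u'_def v'_def m'_def by auto
      also have "\<dots> \<le> Max (insert 0 ((\<lambda>i. max (max (u i) (v i)) (max (l i) (m i))) ` {1..n}))"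
        by (rule Max_ge) (use i in auto)
      finally show ?thesis .
    qed
  qed
  have "inv_optimal n p c b xs ub vb lb mb u' v' l m'"
    unfolding inv_optimal_def using adm' cost opt unfolding inv_optimal_def by fastforce
  moreover have "\<forall>i\<in>{1..n}. xs i = 1 \<longrightarrow> v' i = 0" by (simp add: v'_def)
  moreover have "\<forall>i\<in>{1..n}. xs i = 0 \<longrightarrow> u' i = 0 \<and> m' i = 0" by (simp add: u'_def m'_def)
  ultimately show ?thesis by blast
qed

end
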